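(* Let $G$ be a finite simple robust graph, and let $uv \in E(G)$ with $d(u) \leq 6$ and $d(v) \leq 6$. Then one of $\{u\}$, $\{v\}$, or $\{u,v\}$ is reducible in $G$.
   Context: $G$ is robust if for every $w\in V(G)$, every component of $G[N(w)]$ has at least $5$ vertices. For a set $\mathcal{S}$ of triangles, an $\mathcal{S}$-edge is an edge of a triangle in $\mathcal{S}$. A nonempty set $V_0 \subseteq V(G)$ is reducible if there exist a set $\mathcal{S}$ of pairwise edge-disjoint triangles of $G$ and a set $X \subseteq E(G)$ such that (i) $|X| \leq 2|\mathcal{S}|$; (ii) $G - X$ has no triangle containing a vertex of $V_0$; (iii) $X$ contains every $\mathcal{S}$-edge whose endpoints both lie outside $V_0$. *)

theory Defs
  imports Main
begin

definition simple_graph :: "'a set \<Rightarrow> 'a set set \<Rightarrow> bool" where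
  "simple_graph V E \<longleftrightarrow> finite V \<and> (\<forall>e\<in>E. e \<subseteq> V \<and> card e = 2)"

definition nbhd :: "'a set set \<Rightarrow> 'a \<Rightarrow> 'a set" where
  "nbhd E w = {x. {w, x} \<in> E}"

definition degree :: "'a set set \<Rightarrow> 'a \<Rightarrow> nat" where
  "degree E w = card (nbhd E w)"

definition adj_in :: "'a set set \<Rightarrow> 'a set \<Rightarrow> 'a \<Rightarrow> 'a \<Rightarrow> bool" where
  "adj_in E A x y \<longleftrightarrow> x \<in> A \<and> y \<in> A \<and> {x, y} \<in> E"

definition component_in :: "'a set set \<Rightarrow> 'a set \<Rightarrow> 'a \<Rightarrow> 'a set" where
  "component_in E A x = {y \<in> A. (adj_in E A)\<^sup>*\<^sup>* x y}"

definition robust :: "'a set \<Rightarrow> 'a set set \<Rightarrow> bool" where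
  "robust V E \<longleftrightarrow> (\<forall>w\<in>V. \<forall>x\<in>nbhd E w. card (component_in E (nbhd E w) x) \<ge> 5)"

definition triangles :: "'a set set \<Rightarrow> 'a set set" where
  "triangles E = {{a, b, c} | a b c. {a, b} \<in> E \<and> {b, c} \<in> E \<and> {a, c} \<in> E}"

definition tri_edges :: "'a set \<Rightarrow> 'a set set" where
  "tri_edges T = {e. e \<subseteq> T \<and> card e = 2}"

definition edge_disjoint :: "'a set set \<Rightarrow> bool" where
  "edge_disjoint S \<longleftrightarrow> (\<forall>T1\<in>S. \<forall>T2\<in>S. T1 \<noteq> T2 \<longrightarrow> tri_edges T1 \<inter> tri_edges T2 = {})"

definition reducible :: "'a set \<Rightarrow> 'a set set \<Rightarrow> 'a set \<Rightarrow> bool" where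
  "reducible V E V0 \<longleftrightarrow> V0 \<noteq> {} \<and> V0 \<subseteq> V \<and>
     (\<exists>S X. S \<subseteq> triangles E \<and> edge_disjoint S \<and> X \<subseteq> E \<and>
        card X \<le> 2 * card S \<and>
        (\<forall>T\<in>triangles (E - X). T \<inter> V0 = {}) \<and>
        (\<forall>T\<in>S. \<forall>e\<in>tri_edges T. e \<inter> V0 = {} \<longrightarrow> e \<in> X))"

end

theory Submission imports Defs begin


definition nrm :: "nat \<times> nat \<Rightarrow> nat \<times> nat" where
  "nrm p = (min (fst p) (snd p), max (fst p) (snd p))"

fun te :: "nat \<times> nat \<times> nat \<Rightarrow> (nat \<times> nat) list" where
  "te (a,b,c) = [nrm (a,b), nrm (b,c), nrm (a,c)]"

definition leaf_ok :: "nat \<Rightarrow> nat list \<Rightarrow> (nat \<times> nat) list \<Rightarrow> (nat \<times> nat) list \<Rightarrow> (nat \<times> nat \<times> nat) list \<Rightarrow> (nat \<times> nat) list \<Rightarrow> bool" where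
"leaf_ok n V0 K Z S X \<longleftrightarrow> V0 \<noteq> [] \<and> list_all (\<lambda>a. a < n) V0 \<and>
  list_all (\<lambda>(a,b,c). a<n \<and> b<n \<and> c<n \<and> a\<noteq>b \<and> b\<noteq>c \<and> a\<noteq>c \<and> list_all (\<lambda>p. p \<in> set K) (te (a,b,c))) S \<and>
  distinct (concat (map te S)) \<and>
  list_all (\<lambda>t. list_all (\<lambda>p. fst p \<in> set V0 \<or> snd p \<in> set V0 \<or> p \<in> set X) (te t)) S \<and>
  length X \<le> 2 * length S \<and>
  list_all (\<lambda>a. list_all (\<lambda>b. list_all (\<lambda>c. a=b \<or> a=c \<or> b=c \<or> list_ex (\<lambda>p. p \<in> set Z) (te (a,b,c)) \<or> list_ex (\<lambda>p. p \<in> set X) (te (a,b,c))) [0..<n]) [0..<n]) V0"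

datatype ctree = Leaf "(nat \<times> nat \<times> nat) list" "(nat \<times> nat) list" | Contra nat | Split "nat \<times> nat" ctree ctree

fun check_tree :: "nat \<Rightarrow> nat list \<Rightarrow> (nat \<times> nat) list list \<Rightarrow> (nat \<times> nat) list \<Rightarrow> (nat \<times> nat) list \<Rightarrow> ctree \<Rightarrow> bool" where
  "check_tree n V0 CL K Z (Leaf S X) = leaf_ok n V0 K Z S X"
| "check_tree n V0 CL K Z (Contra i) = (i < length CL \<and> list_all (\<lambda>p. p \<in> set Z) (CL ! i))"
| "check_tree n V0 CL K Z (Split p t1 t2) = (check_tree n V0 CL (p#K) Z t1 \<and> check_tree n V0 CL K (p#Z) t2)"

definition "U_K0 n = map (\<lambda>i. (0::nat,i)) [1..<n]"
definition "U_Z0 = [(1::nat,2::nat),(1,3)]"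
definition "U_CL n = map (\<lambda>i. map (\<lambda>j. nrm (i,j)) (filter (\<lambda>j. j\<noteq>i) [1..<n])) [1..<n]"

definition "dcl W = concat (map (\<lambda>x. concat (map (\<lambda>y. map (\<lambda>z. [nrm(x,y), nrm(x,z)]) (filter (\<lambda>z. z\<noteq>x \<and> z\<noteq>y) W)) (filter (\<lambda>y. y\<noteq>x) W))) W)"
definition "D_I nI = [2..<2+nI]"
definition "D_A nI nA = [2+nI..<2+nI+nA]"
definition "D_B nI nA nB = [2+nI+nA..<2+nI+nA+nB]"
definition "D_K0 nI nA nB = (0::nat,1::nat) # map (\<lambda>i. (0,i)) (D_I nI @ D_A nI nA) @ map (\<lambda>i. (1,i)) (D_I nI @ D_B nI nA nB)"
definition "D_Z0 nI nA nB = map (\<lambda>i. (0::nat,i)) (D_B nI nA nB) @ map (\<lambda>i. (1,i)) (D_A nI nA)"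
definition "D_CL nI nA nB = dcl (1 # D_I nI @ D_A nI nA) @ dcl (0 # D_I nI @ D_B nI nA nB)"

definition "tree_U5 = (Split (1,4) (Split (2,3) (Leaf [(0,1,4),(0,2,3)] [(1,4),(2,3),(0,4),(0,5)]) (Split (2,5) (Leaf [(0,1,4),(0,2,5)] [(1,4),(2,5),(0,4),(0,5)]) (Split (2,4) (Split (1,5) (Leaf [(0,1,5),(0,2,4)] [(1,5),(2,4),(0,3),(0,4)]) (Split (3,5) (Leaf [(0,1,4),(0,3,5)] [(1,4),(3,5),(0,4)]) (Leaf [(0,1,4)] [(1,4),(0,4)]))) (Contra 1)))) (Split (1,5) (Split (2,3) (Leaf [(0,1,5),(0,2,3)] [(1,5),(2,3),(0,4),(0,5)]) (Split (2,4) (Leaf [(0,1,5),(0,2,4)] [(1,5),(2,4),(0,3),(0,5)]) (Split (3,4) (Leaf [(0,1,5),(0,3,4)] [(1,5),(3,4),(0,5)]) (Leaf [(0,1,5)] [(1,5),(0,5)])))) (Contra 0)))"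

definition "tree_U6 = (Split (1,4) (Split (1,5) (Split (1,6) (Split (2,3) (Split (4,5) (Leaf [(0,1,6),(0,2,3),(0,4,5)] [(1,6),(2,3),(4,5),(0,4),(0,5),(0,6)]) (Split (4,6) (Leaf [(0,1,5),(0,2,3),(0,4,6)] [(1,5),(2,3),(4,6),(0,4),(0,5),(0,6)]) (Split (5,6) (Leaf [(0,1,4),(0,2,3),(0,5,6)] [(1,4),(2,3),(5,6),(0,1),(0,2),(0,3)]) (Split (2,4) (Split (3,5) (Leaf [(0,1,6),(0,2,4),(0,3,5)] [(1,6),(2,4),(3,5),(0,1),(0,2),(0,3)]) (Split (2,5) (Split (3,4) (Leaf [(0,1,6),(0,2,5),(0,3,4)] [(1,6),(2,5),(3,4),(0,1),(0,2),(0,3)]) (Split (3,6) (Leaf [(0,1,4),(0,2,5),(0,3,6)] [(1,4),(2,5),(3,6),(0,1),(0,2)]) (Leaf [(0,1,4),(0,2,3)] [(1,4),(2,3),(0,1),(0,2)]))) (Leaf [(0,1,5),(0,2,3)] [(1,5),(2,3),(0,4),(0,6)]))) (Split (3,4) (Split (2,5) (Leaf [(0,1,6),(0,2,5),(0,3,4)] [(1,6),(2,5),(3,4),(0,1),(0,2),(0,3)]) (Split (2,6) (Leaf [(0,1,5),(0,2,6),(0,3,4)] [(1,5),(2,6),(3,4),(0,1),(0,3)]) (Leaf [(0,1,4),(0,2,3)] [(1,4),(2,3),(0,1),(0,3)]))) (Leaf [(0,1,4),(0,2,3)] [(1,4),(2,3),(0,5),(0,6)])))))) (Split (2,4) (Split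 (3,5) (Leaf [(0,1,6),(0,2,4),(0,3,5)] [(1,6),(2,4),(3,5),(0,4),(0,5),(0,6)]) (Split (2,5) (Split (3,4) (Leaf [(0,1,6),(0,2,5),(0,3,4)] [(1,6),(2,5),(3,4),(0,1),(0,4),(0,6)]) (Split (3,6) (Leaf [(0,1,4),(0,2,5),(0,3,6)] [(1,4),(2,5),(3,6),(0,1),(0,4),(0,6)]) (Contra 2))) (Leaf [(0,1,5),(0,2,4)] [(1,5),(2,4),(0,4),(0,6)]))) (Split (2,5) (Split (3,4) (Leaf [(0,1,6),(0,2,5),(0,3,4)] [(1,6),(2,5),(3,4),(0,1),(0,5),(0,6)]) (Leaf [(0,1,4),(0,2,5)] [(1,4),(2,5),(0,5),(0,6)])) (Split (2,6) (Split (3,4) (Leaf [(0,1,5),(0,2,6),(0,3,4)] [(1,5),(2,6),(3,4),(0,1),(0,5),(0,6)]) (Leaf [(0,1,4),(0,2,6)] [(1,4),(2,6),(0,5),(0,6)])) (Contra 1))))) (Split (2,3) (Split (4,6) (Leaf [(0,1,5),(0,2,3),(0,4,6)] [(1,5),(2,3),(4,6),(0,4),(0,5),(0,6)]) (Split (5,6) (Leaf [(0,1,4),(0,2,3),(0,5,6)] [(1,4),(2,3),(5,6),(0,2),(0,3),(0,5)]) (Split (2,4) (Split (3,6) (Leaf [(0,1,5),(0,2,4),(0,3,6)] [(1,5),(2,4),(3,6),(0,2),(0,3),(0,4)]) (Split (2,6) (Split (3,4) (Leaf [(0,1,4),(0,2,6),(2,3,4)] [(1,4),(2,3),(2,4),(2,6),(3,4),(0,5)])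 (Leaf [(0,1,4),(0,2,3)] [(1,4),(2,3),(0,2),(0,5)])) (Contra 5))) (Split (2,6) (Leaf [(0,1,4),(0,2,6)] [(1,4),(2,6),(0,3),(0,5)]) (Leaf [(0,1,4),(0,2,3)] [(1,4),(2,3),(0,3),(0,5)]))))) (Split (2,4) (Split (3,6) (Leaf [(0,1,5),(0,2,4),(0,3,6)] [(1,5),(2,4),(3,6),(0,2),(0,4),(0,5)]) (Split (2,6) (Leaf [(0,1,4),(0,2,6)] [(1,4),(2,6),(0,4),(0,5)]) (Leaf [(0,1,5),(0,2,4)] [(1,5),(2,4),(0,4),(0,5)]))) (Split (2,5) (Split (3,4) (Split (2,6) (Leaf [(0,1,5),(0,2,6),(0,3,4)] [(1,5),(2,6),(3,4),(0,1),(0,5),(0,6)]) (Split (3,6) (Leaf [(0,1,4),(0,2,5),(0,3,6)] [(1,4),(2,5),(3,6),(0,4),(0,5)]) (Leaf [(0,1,4),(0,2,5)] [(1,4),(2,5),(0,4),(0,5)]))) (Leaf [(0,1,4),(0,2,5)] [(1,4),(2,5),(0,5),(0,6)])) (Split (2,6) (Split (3,4) (Leaf [(0,1,5),(0,2,6),(0,3,4)] [(1,5),(2,6),(3,4),(0,1),(0,5),(0,6)]) (Leaf [(0,1,4),(0,2,6)] [(1,4),(2,6),(0,5),(0,6)])) (Contra 1)))))) (Split (1,6) (Split (2,3) (Split (4,5) (Leaf [(0,1,6),(0,2,3),(0,4,5)] [(1,6),(2,3),(4,5),(0,4),(0,5),(0,6)]) (Split (5,6) (Leaf [(0,1,4),(0,2,3),(0,5,6)]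 [(1,4),(2,3),(5,6),(0,2),(0,3),(0,6)]) (Split (2,4) (Split (3,5) (Leaf [(0,1,6),(0,2,4),(0,3,5)] [(1,6),(2,4),(3,5),(0,2),(0,3),(0,4)]) (Split (2,5) (Split (3,4) (Leaf [(0,1,4),(0,2,5),(2,3,4)] [(1,4),(2,3),(2,4),(2,5),(3,4),(0,6)]) (Leaf [(0,1,4),(0,2,3)] [(1,4),(2,3),(0,2),(0,6)])) (Contra 4))) (Split (2,5) (Leaf [(0,1,4),(0,2,5)] [(1,4),(2,5),(0,3),(0,6)]) (Leaf [(0,1,4),(0,2,3)] [(1,4),(2,3),(0,3),(0,6)]))))) (Split (2,4) (Split (3,5) (Leaf [(0,1,6),(0,2,4),(0,3,5)] [(1,6),(2,4),(3,5),(0,2),(0,4),(0,6)]) (Split (2,5) (Leaf [(0,1,4),(0,2,5)] [(1,4),(2,5),(0,4),(0,6)]) (Leaf [(0,1,6),(0,2,4)] [(1,6),(2,4),(0,4),(0,6)]))) (Split (2,5) (Split (3,4) (Leaf [(0,1,6),(0,2,5),(0,3,4)] [(1,6),(2,5),(3,4),(0,1),(0,5),(0,6)]) (Leaf [(0,1,4),(0,2,5)] [(1,4),(2,5),(0,5),(0,6)])) (Split (2,6) (Split (3,5) (Leaf [(0,1,4),(0,2,6),(0,3,5)] [(1,4),(2,6),(3,5),(0,4),(0,6)]) (Leaf [(0,1,4),(0,2,6)] [(1,4),(2,6),(0,4),(0,6)])) (Contra 1))))) (Split (2,3) (Split (5,6) (Leaf [(0,1,4),(0,2,3),(0,5,6)]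 [(1,4),(2,3),(5,6),(0,2),(0,3),(0,4)]) (Split (2,4) (Split (2,5) (Split (2,6) (Split (3,5) (Leaf [(0,1,4),(0,2,6),(0,3,5)] [(1,4),(2,6),(3,5),(0,2),(0,3),(0,4)]) (Split (3,6) (Leaf [(0,1,4),(0,2,5),(0,3,6)] [(1,4),(2,5),(3,6),(0,2),(0,4)]) (Leaf [(0,1,4),(0,2,3)] [(1,4),(2,3),(0,2),(0,4)]))) (Leaf [(0,1,4),(0,2,5)] [(1,4),(2,5),(0,3),(0,4)])) (Split (2,6) (Leaf [(0,1,4),(0,2,6)] [(1,4),(2,6),(0,3),(0,4)]) (Leaf [(0,1,4),(0,2,3)] [(1,4),(2,3),(0,3),(0,4)]))) (Split (3,4) (Split (2,5) (Split (2,6) (Split (3,5) (Leaf [(0,1,4),(0,2,6),(0,3,5)] [(1,4),(2,6),(3,5),(0,2),(0,3),(0,4)]) (Split (3,6) (Leaf [(0,1,4),(0,2,5),(0,3,6)] [(1,4),(2,5),(3,6),(0,2),(0,4)]) (Leaf [(0,1,4),(0,2,3)] [(1,4),(2,3),(0,2),(0,4)]))) (Leaf [(0,1,4),(0,2,5)] [(1,4),(2,5),(0,3),(0,4)])) (Split (2,6) (Leaf [(0,1,4),(0,2,6)] [(1,4),(2,6),(0,3),(0,4)]) (Leaf [(0,1,4),(0,2,3)] [(1,4),(2,3),(0,3),(0,4)]))) (Leaf [(0,1,4),(0,2,3)] [(1,4),(2,3),(0,5),(0,6)])))) (Split (2,4) (Split (2,5) (Split (3,5) (Split (2,6) (Leaf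 [(0,1,4),(0,2,6),(0,3,5)] [(1,4),(2,6),(3,5),(0,2),(0,4),(0,6)]) (Split (3,6) (Leaf [(0,1,4),(0,2,5),(0,3,6)] [(1,4),(2,5),(3,6),(0,4),(0,5)]) (Leaf [(0,1,4),(0,2,5)] [(1,4),(2,5),(0,4),(0,5)]))) (Leaf [(0,1,4),(0,2,5)] [(1,4),(2,5),(0,4),(0,6)])) (Split (3,5) (Leaf [(0,1,4),(0,3,5)] [(1,4),(3,5),(0,4),(0,6)]) (Split (2,6) (Leaf [(0,1,4),(0,2,6)] [(1,4),(2,6),(0,4),(0,6)]) (Split (3,6) (Leaf [(0,1,4),(0,3,6)] [(1,4),(3,6),(0,4),(0,5)]) (Split (5,6) (Leaf [(0,1,4),(0,5,6)] [(1,4),(5,6),(0,4)]) (Leaf [(0,1,4)] [(1,4),(0,4)])))))) (Split (2,5) (Split (3,4) (Split (3,5) (Split (4,5) (Leaf [(0,1,4),(0,2,5),(3,4,5)] [(1,4),(2,5),(3,4),(3,5),(4,5),(0,6)]) (Leaf [(0,1,4),(0,2,5)] [(1,4),(2,5),(0,3),(0,6)])) (Leaf [(0,1,4),(0,2,5)] [(1,4),(2,5),(0,4),(0,6)])) (Leaf [(0,1,4),(0,2,5)] [(1,4),(2,5),(0,5),(0,6)])) (Split (2,6) (Split (3,5) (Leaf [(0,1,4),(0,2,6),(0,3,5)] [(1,4),(2,6),(3,5),(0,4),(0,6)]) (Leaf [(0,1,4),(0,2,6)] [(1,4),(2,6),(0,4),(0,6)])) (Contra 1))))))) (Split (1,5)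 (Split (1,6) (Split (2,3) (Split (4,5) (Leaf [(0,1,6),(0,2,3),(0,4,5)] [(1,6),(2,3),(4,5),(0,4),(0,5),(0,6)]) (Split (4,6) (Leaf [(0,1,5),(0,2,3),(0,4,6)] [(1,5),(2,3),(4,6),(0,2),(0,3),(0,6)]) (Split (2,4) (Split (2,5) (Split (2,6) (Split (3,4) (Leaf [(0,1,5),(0,2,6),(0,3,4)] [(1,5),(2,6),(3,4),(0,2),(0,3),(0,6)]) (Split (3,5) (Leaf [(0,1,5),(0,2,4),(2,3,5)] [(1,5),(2,3),(2,4),(2,5),(3,5),(0,6)]) (Leaf [(0,1,5),(0,2,3)] [(1,5),(2,3),(0,2),(0,6)]))) (Leaf [(0,1,6),(0,2,4)] [(1,6),(2,4),(0,3),(0,5)])) (Leaf [(0,1,5),(0,2,4)] [(1,5),(2,4),(0,3),(0,6)])) (Split (2,5) (Split (3,4) (Leaf [(0,1,6),(0,2,5),(0,3,4)] [(1,6),(2,5),(3,4),(0,1),(0,3),(0,6)]) (Contra 3)) (Leaf [(0,1,5),(0,2,3)] [(1,5),(2,3),(0,3),(0,6)]))))) (Split (2,4) (Split (3,4) (Split (2,5) (Leaf [(0,1,6),(0,2,5),(0,3,4)] [(1,6),(2,5),(3,4),(0,2),(0,5),(0,6)]) (Split (3,5) (Leaf [(0,1,6),(0,2,4),(0,3,5)] [(1,6),(2,4),(3,5),(0,1),(0,4),(0,6)]) (Leaf [(0,1,5),(0,2,4)] [(1,5),(2,4),(0,4),(0,6)]))) (Leaf [(0,1,5),(0,2,4)]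 [(1,5),(2,4),(0,5),(0,6)])) (Split (3,4) (Leaf [(0,1,5),(0,3,4)] [(1,5),(3,4),(0,5),(0,6)]) (Split (2,5) (Leaf [(0,1,6),(0,2,5)] [(1,6),(2,5),(0,5),(0,6)]) (Split (2,6) (Leaf [(0,1,5),(0,2,6)] [(1,5),(2,6),(0,5),(0,6)]) (Contra 1)))))) (Split (2,3) (Split (4,6) (Leaf [(0,1,5),(0,2,3),(0,4,6)] [(1,5),(2,3),(4,6),(0,2),(0,3),(0,5)]) (Split (2,4) (Split (2,6) (Split (3,4) (Leaf [(0,1,5),(0,2,6),(0,3,4)] [(1,5),(2,6),(3,4),(0,2),(0,3),(0,5)]) (Split (3,6) (Leaf [(0,1,5),(0,2,4),(0,3,6)] [(1,5),(2,4),(3,6),(0,2),(0,5)]) (Leaf [(0,1,5),(0,2,3)] [(1,5),(2,3),(0,2),(0,5)]))) (Leaf [(0,1,5),(0,2,4)] [(1,5),(2,4),(0,3),(0,5)])) (Split (2,6) (Leaf [(0,1,5),(0,2,6)] [(1,5),(2,6),(0,3),(0,5)]) (Leaf [(0,1,5),(0,2,3)] [(1,5),(2,3),(0,3),(0,5)])))) (Split (2,4) (Split (3,4) (Split (2,6) (Leaf [(0,1,5),(0,2,6),(0,3,4)] [(1,5),(2,6),(3,4),(0,2),(0,5),(0,6)]) (Split (3,6) (Leaf [(0,1,5),(0,2,4),(0,3,6)] [(1,5),(2,4),(3,6),(0,4),(0,5)]) (Leaf [(0,1,5),(0,2,4)] [(1,5),(2,4),(0,4),(0,5)]))) (Leaf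 [(0,1,5),(0,2,4)] [(1,5),(2,4),(0,5),(0,6)])) (Split (3,4) (Leaf [(0,1,5),(0,3,4)] [(1,5),(3,4),(0,5),(0,6)]) (Split (2,6) (Leaf [(0,1,5),(0,2,6)] [(1,5),(2,6),(0,5),(0,6)]) (Split (2,5) (Split (3,6) (Leaf [(0,1,5),(0,3,6)] [(1,5),(3,6),(0,4),(0,5)]) (Split (4,6) (Leaf [(0,1,5),(0,4,6)] [(1,5),(4,6),(0,5)]) (Leaf [(0,1,5)] [(1,5),(0,5)]))) (Contra 1))))))) (Split (1,6) (Split (2,3) (Split (4,5) (Leaf [(0,1,6),(0,2,3),(0,4,5)] [(1,6),(2,3),(4,5),(0,2),(0,3),(0,6)]) (Split (2,4) (Split (2,5) (Split (3,4) (Leaf [(0,1,6),(0,2,5),(0,3,4)] [(1,6),(2,5),(3,4),(0,2),(0,3),(0,6)]) (Split (3,5) (Leaf [(0,1,6),(0,2,4),(0,3,5)] [(1,6),(2,4),(3,5),(0,2),(0,6)]) (Leaf [(0,1,6),(0,2,3)] [(1,6),(2,3),(0,2),(0,6)]))) (Leaf [(0,1,6),(0,2,4)] [(1,6),(2,4),(0,3),(0,6)])) (Split (2,5) (Leaf [(0,1,6),(0,2,5)] [(1,6),(2,5),(0,3),(0,6)]) (Leaf [(0,1,6),(0,2,3)] [(1,6),(2,3),(0,3),(0,6)])))) (Split (2,4) (Split (3,4) (Split (2,5) (Leaf [(0,1,6),(0,2,5),(0,3,4)] [(1,6),(2,5),(3,4),(0,2),(0,5),(0,6)]) (Split (3,5)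 (Leaf [(0,1,6),(0,2,4),(0,3,5)] [(1,6),(2,4),(3,5),(0,4),(0,6)]) (Leaf [(0,1,6),(0,2,4)] [(1,6),(2,4),(0,4),(0,6)]))) (Leaf [(0,1,6),(0,2,4)] [(1,6),(2,4),(0,5),(0,6)])) (Split (3,4) (Leaf [(0,1,6),(0,3,4)] [(1,6),(3,4),(0,5),(0,6)]) (Split (2,5) (Leaf [(0,1,6),(0,2,5)] [(1,6),(2,5),(0,5),(0,6)]) (Split (2,6) (Split (3,5) (Leaf [(0,1,6),(0,3,5)] [(1,6),(3,5),(0,4),(0,6)]) (Split (4,5) (Leaf [(0,1,6),(0,4,5)] [(1,6),(4,5),(0,6)]) (Leaf [(0,1,6)] [(1,6),(0,6)]))) (Contra 1)))))) (Contra 0))))"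

definition "tree_D500 = (Split (2,3) (Split (2,4) (Split (2,5) (Split (2,6) (Split (3,4) (Split (3,5) (Leaf [(0,1,4),(0,2,5),(1,2,6),(1,3,5),(2,3,4)] [(2,3),(2,4),(2,5),(2,6),(3,4),(3,5),(0,1),(0,6),(1,6),(4,5)]) (Leaf [(0,1,6),(0,2,3),(1,2,5),(1,3,4)] [(2,3),(2,5),(3,4),(0,1),(0,4),(0,6),(1,4),(1,6)])) (Split (3,5) (Leaf [(0,1,6),(0,2,3),(1,2,4),(1,3,5)] [(2,3),(2,4),(3,5),(0,1),(0,5),(0,6),(1,5),(1,6)]) (Contra 50))) (Split (3,6) (Leaf [(0,1,4),(0,2,3),(1,2,5),(1,3,6)] [(2,3),(2,5),(3,6),(0,1),(0,4),(0,5),(1,4),(1,5)]) (Contra 105))) (Split (3,5) (Leaf [(0,1,6),(0,2,3),(1,2,4),(1,3,5)] [(2,3),(2,4),(3,5),(0,1),(0,4),(0,6),(1,4),(1,6)]) (Contra 85))) (Split (2,5) (Split (3,4) (Leaf [(0,1,6),(0,2,3),(1,2,5),(1,3,4)] [(2,3),(2,5),(3,4),(0,1),(0,5),(0,6),(1,5),(1,6)]) (Contra 65)) (Contra 30))) (Split (2,4) (Split (2,5) (Split (3,4) (Leaf [(0,1,6),(0,2,4),(1,2,5),(1,3,4)] [(2,4),(2,5),(3,4),(0,1),(0,5),(0,6),(1,5),(1,6)]) (Contra 45)) (Contra 26)) (Contra 25)))"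

definition "tree_D400 = (Split (2,3) (Split (2,4) (Leaf [(0,1,5),(0,2,3),(1,2,4)] [(2,3),(2,4),(0,1),(0,5),(1,5),(3,4)]) (Split (2,5) (Leaf [(0,1,4),(0,2,3),(1,2,5)] [(2,3),(2,5),(0,1),(0,3),(1,3),(4,5)]) (Contra 20))) (Split (2,4) (Split (2,5) (Leaf [(0,1,3),(0,2,4),(1,2,5)] [(2,4),(2,5),(0,1),(0,3),(1,3),(4,5)]) (Contra 17)) (Contra 16)))"

definition "tree_D410 = (Split (2,6) (Split (3,6) (Split (4,6) (Split (5,6) (Split (2,3) (Split (2,4) (Leaf [(0,1,5),(0,2,3),(0,4,6),(1,2,4)] [(2,3),(2,4),(4,6),(0,1),(0,5),(0,6),(1,5),(3,4)]) (Split (2,5) (Leaf [(0,1,4),(0,2,3),(0,5,6),(1,2,5)] [(2,3),(2,5),(5,6),(0,1),(0,3),(0,6),(1,3),(4,5)]) (Contra 30))) (Split (2,4) (Split (2,5) (Leaf [(0,1,3),(0,2,4),(0,5,6),(1,2,5)] [(2,4),(2,5),(5,6),(0,1),(0,3),(0,6),(1,3),(4,5)]) (Contra 26)) (Contra 25))) (Contra 103)) (Contra 102)) (Contra 101)) (Contra 100))"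

definition "tree_D401 = (Split (2,6) (Split (3,6) (Split (4,6) (Split (5,6) (Split (2,3) (Split (2,4) (Leaf [(0,1,5),(0,2,3),(1,2,4),(1,3,6)] [(2,3),(2,4),(3,6),(0,1),(0,5),(1,5),(1,6),(3,4)]) (Split (2,5) (Leaf [(0,1,4),(0,2,3),(1,2,5),(1,3,6)] [(2,3),(2,5),(3,6),(0,1),(0,3),(1,3),(1,6),(4,5)]) (Contra 20))) (Split (2,4) (Split (2,5) (Leaf [(0,1,3),(0,2,4),(1,2,5),(1,4,6)] [(2,4),(2,5),(4,6),(0,1),(0,3),(1,3),(1,6),(4,5)]) (Contra 17)) (Contra 16))) (Contra 163)) (Contra 162)) (Contra 161)) (Contra 160))"

definition "tree_D411 = (Split (2,6) (Split (2,7) (Split (3,6) (Split (3,7) (Split (4,6) (Split (4,7) (Split (5,6) (Split (5,7) (Split (2,3) (Split (2,4) (Leaf [(0,1,5),(0,2,3),(0,4,6),(1,2,4),(1,3,7)] [(2,3),(2,4),(3,7),(4,6),(0,1),(0,5),(0,6),(1,5),(1,7),(3,4)]) (Split (2,5) (Leaf [(0,1,4),(0,2,3),(0,5,6),(1,2,5),(1,3,7)] [(2,3),(2,5),(3,7),(5,6),(0,1),(0,3),(0,6),(1,3),(1,7),(4,5)]) (Contra 30))) (Split (2,4) (Split (2,5) (Leaf [(0,1,3),(0,2,4),(0,5,6),(1,2,5),(1,4,7)] [(2,4),(2,5),(4,7),(5,6),(0,1),(0,3),(0,6),(1,3),(1,7),(4,5)]) (Contra 26)) (Contra 25))) (Contra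 223)) (Contra 103)) (Contra 222)) (Contra 102)) (Contra 221)) (Contra 101)) (Contra 220)) (Contra 100))"

definition "tree_D311 = (Split (2,5) (Split (3,6) (Leaf [(0,1,4),(0,2,5),(1,3,6)] [(2,5),(3,6),(0,3),(0,4),(1,2),(1,4)]) (Contra 109)) (Contra 48))"

lemma chk_U5: "check_tree 6 [0] (U_CL 6) (U_K0 6) U_Z0 tree_U5" by code_simp
lemma chk_D311: "check_tree 7 [0,1] (D_CL 3 1 1) (D_K0 3 1 1) (D_Z0 3 1 1) tree_D311" by code_simp


lemma chk_U6: "check_tree 7 [0] (U_CL 7) (U_K0 7) U_Z0 tree_U6" by code_simp
lemma chk_D500: "check_tree 7 [0,1] (D_CL 5 0 0) (D_K0 5 0 0) (D_Z0 5 0 0) tree_D500" by code_simp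
lemma chk_D400: "check_tree 6 [0,1] (D_CL 4 0 0) (D_K0 4 0 0) (D_Z0 4 0 0) tree_D400" by code_simp
lemma chk_D410: "check_tree 7 [0,1] (D_CL 4 1 0) (D_K0 4 1 0) (D_Z0 4 1 0) tree_D410" by code_simp
lemma chk_D401: "check_tree 7 [0,1] (D_CL 4 0 1) (D_K0 4 0 1) (D_Z0 4 0 1) tree_D401" by code_simp
lemma chk_D411: "check_tree 8 [0,1] (D_CL 4 1 1) (D_K0 4 1 1) (D_Z0 4 1 1) tree_D411" by code_simp

definition dd :: "'a list \<Rightarrow> nat \<times> nat \<Rightarrow> 'a set" where
  "dd vs p = {vs ! fst p, vs ! snd p}"

definition ed :: "'a set set \<Rightarrow> 'a list \<Rightarrow> nat \<times> nat \<Rightarrow> bool" where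
  "ed E vs p = (dd vs p \<in> E)"

lemma dd_nrm[simp]: "dd vs (nrm p) = dd vs p"
  by (cases p) (auto simp: dd_def nrm_def min_def max_def insert_commute)

lemma nrm_idem[simp]: "nrm (nrm p) = nrm p"
  by (auto simp: nrm_def min_def max_def)

lemma nrm_fst: "fst (nrm p) = fst p \<or> fst (nrm p) = snd p"
  by (auto simp: nrm_def min_def)

lemma nrm_snd: "snd (nrm p) = fst p \<or> snd (nrm p) = snd p"
  by (auto simp: nrm_def max_def)

lemma nrm_neq: "fst p \<noteq> snd p \<Longrightarrow> fst (nrm p) \<noteq> snd (nrm p)"
  by (auto simp: nrm_def min_def max_def)

lemma nrm_ok: "i < n \<Longrightarrow> j < n \<Longrightarrow> i \<noteq> j \<Longrightarrow> fst (nrm (i,j)) < n \<and> snd (nrm (i,j)) < n \<and> fst (nrm (i,j)) \<noteq> snd (nrm (i,j)) \<and> nrm (nrm (i,j)) = nrm (i,j)"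
  using nrm_fst[of "(i,j)"] nrm_snd[of "(i,j)"] nrm_neq[of "(i,j)"] by auto

lemma distinct_concat_map_disj:
  "distinct (concat (map f xs)) \<Longrightarrow> x \<in> set xs \<Longrightarrow> y \<in> set xs \<Longrightarrow> x \<noteq> y \<Longrightarrow> set (f x) \<inter> set (f y) = {}"
  by (induction xs) auto

lemma distinct_concat_map_distinct:
  "distinct (concat (map f xs)) \<Longrightarrow> (\<And>x. f x \<noteq> []) \<Longrightarrow> distinct xs"
proof (induction xs)
  case Nil then show ?case by simp
next
  case (Cons a xs)
  have "a \<notin> set xs"
  proof
    assume "a \<in> set xs"
    then have "set (f a) \<subseteq> set (concat (map f xs))" by auto
    moreover obtain z where "z \<in> set (f a)" using Cons(3)[of a] by (cases "f a") auto
    ultimately show False using Cons(2) by auto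
  qed
  then show ?case using Cons by auto
qed

lemma tri_edges3:
  assumes "x \<noteq> y" "y \<noteq> z" "x \<noteq> z"
  shows "tri_edges {x,y,z} = {{x,y},{y,z},{x,z}}"
proof
  show "tri_edges {x,y,z} \<subseteq> {{x,y},{y,z},{x,z}}"
  proof
    fix e assume "e \<in> tri_edges {x,y,z}"
    then have "e \<subseteq> {x,y,z}" "card e = 2" by (auto simp: tri_edges_def)
    then obtain p q where "e = {p,q}" "p \<noteq> q" by (auto simp: card_2_iff)
    with \<open>e \<subseteq> {x,y,z}\<close> show "e \<in> {{x,y},{y,z},{x,z}}" by auto
  qed
next
  show "{{x,y},{y,z},{x,z}} \<subseteq> tri_edges {x,y,z}"
    using assms by (auto simp: tri_edges_def)
qed

lemma te_dd:
  "dd vs ` set (te (a,b,c)) = {{vs!a, vs!b}, {vs!b, vs!c}, {vs!a, vs!c}}"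
  by simp (simp add: dd_def)

lemma edge_card2: "simple_graph V E \<Longrightarrow> {x,y} \<in> E \<Longrightarrow> x \<noteq> y"
  by (auto simp: simple_graph_def)

lemma leaf_sound:
  fixes vs :: "'a list"
  assumes sg: "simple_graph V E" and dist: "distinct vs" and sub: "set vs \<subseteq> V"
    and len: "length vs = n"
    and cl: "\<forall>a\<in>set V0. nbhd E (vs!a) \<subseteq> set vs"
    and K: "\<forall>p\<in>set K. ed E vs p" and Z: "\<forall>p\<in>set Z. \<not> ed E vs p"
    and ok: "leaf_ok n V0 K Z S X"
  shows "reducible V E ((!) vs ` set V0)"
proof -
  note okd = ok[unfolded leaf_ok_def list_all_iff list_ex_iff]
  have V0ne: "V0 \<noteq> []" and V0n: "\<forall>a\<in>set V0. a < n" using okd by auto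
  have Sok: "\<forall>t\<in>set S. case t of (a,b,c) \<Rightarrow> a<n \<and> b<n \<and> c<n \<and> a\<noteq>b \<and> b\<noteq>c \<and> a\<noteq>c \<and> (\<forall>p\<in>set (te (a,b,c)). p \<in> set K)"
    using okd by (auto simp: list_all_iff)
  have Sdist: "distinct (concat (map te S))" using okd by auto
  have Sforced: "\<forall>t\<in>set S. \<forall>p\<in>set (te t). fst p \<in> set V0 \<or> snd p \<in> set V0 \<or> p \<in> set X"
    using okd by auto
  have Xlen: "length X \<le> 2 * length S" using okd by auto
  have hit0: "list_all (\<lambda>a. list_all (\<lambda>b. list_all (\<lambda>c. a=b \<or> a=c \<or> b=c \<or> list_ex (\<lambda>p. p \<in> set Z) (te (a,b,c)) \<or> list_ex (\<lambda>p. p \<in> set X) (te (a,b,c))) [0..<n]) [0..<n]) V0"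
    using ok unfolding leaf_ok_def by blast
  have hit: "\<forall>a\<in>set V0. \<forall>b<n. \<forall>c<n. a=b \<or> a=c \<or> b=c \<or> (\<exists>p\<in>set (te (a,b,c)). p \<in> set Z) \<or> (\<exists>p\<in>set (te (a,b,c)). p \<in> set X)"
  proof (intro ballI allI impI)
    fix a b c assume "a \<in> set V0" "b < n" "c < n"
    then show "a=b \<or> a=c \<or> b=c \<or> (\<exists>p\<in>set (te (a,b,c)). p \<in> set Z) \<or> (\<exists>p\<in>set (te (a,b,c)). p \<in> set X)"
      using hit0 unfolding list_all_iff list_ex_iff by (metis atLeastLessThan_iff set_upt zero_le)
  qed
  have inj: "\<And>i j. i < n \<Longrightarrow> j < n \<Longrightarrow> vs!i = vs!j \<longleftrightarrow> i = j"
    using dist len by (simp add: nth_eq_iff_index_eq)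
  define Tr where "Tr = (\<lambda>(a::nat,b::nat,c::nat). {vs!a, vs!b, vs!c})"
  define SS where "SS = Tr ` set S"
  define XX where "XX = dd vs ` set X \<inter> E"
  define V0' where "V0' = (!) vs ` set V0"
  have TrE: "tri_edges (Tr t) = dd vs ` set (te t)" if "t \<in> set S" for t
  proof -
    obtain a b c where t: "t = (a,b,c)" by (cases t) auto
    with that Sok have "a<n" "b<n" "c<n" "a\<noteq>b" "b\<noteq>c" "a\<noteq>c" by auto
    then have "vs!a \<noteq> vs!b" "vs!b \<noteq> vs!c" "vs!a \<noteq> vs!c" using inj by auto
    then show ?thesis unfolding t Tr_def using tri_edges3[of "vs!a" "vs!b" "vs!c"] te_dd[of vs a b c] by simp
  qed
  have teK: "\<And>t p. t \<in> set S \<Longrightarrow> p \<in> set (te t) \<Longrightarrow> p \<in> set K"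
    using Sok by fastforce
  have te_ne: "\<And>t. te t \<noteq> []" by (case_tac t) auto
  have disj: "set (te t1) \<inter> set (te t2) = {}" if "t1 \<in> set S" "t2 \<in> set S" "t1 \<noteq> t2" for t1 t2
    using distinct_concat_map_disj[OF Sdist that] .
  have teidx: "fst p < n \<and> snd p < n \<and> fst p \<noteq> snd p \<and> nrm p = p" if "t \<in> set S" "p \<in> set (te t)" for t p
  proof -
    obtain a b c where t: "t = (a,b,c)" by (cases t) auto
    with that Sok have "a<n" "b<n" "c<n" "a\<noteq>b" "b\<noteq>c" "a\<noteq>c" by auto
    with that t show ?thesis using nrm_ok[of a n b] nrm_ok[of b n c] nrm_ok[of a n c] by auto
  qed
  have dd_inj: "p = q" if "t1 \<in> set S" "p \<in> set (te t1)" "t2 \<in> set S" "q \<in> set (te t2)" "dd vs p = dd vs q" for t1 t2 p q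
  proof -
    have p: "fst p < n" "snd p < n" "fst p \<noteq> snd p" "nrm p = p" using teidx[OF that(1) that(2)] by auto
    have q: "fst q < n" "snd q < n" "fst q \<noteq> snd q" "nrm q = q" using teidx[OF that(3) that(4)] by auto
    have "{vs ! fst p, vs ! snd p} = {vs ! fst q, vs ! snd q}" using that(5) by (simp add: dd_def)
    then have "(vs ! fst p = vs ! fst q \<and> vs ! snd p = vs ! snd q) \<or> (vs ! fst p = vs ! snd q \<and> vs ! snd p = vs ! fst q)"
      by (simp add: doubleton_eq_iff)
    then have "(fst p = fst q \<and> snd p = snd q) \<or> (fst p = snd q \<and> snd p = fst q)"
      using inj[OF p(1) q(1)] inj[OF p(2) q(2)] inj[OF p(1) q(2)] inj[OF p(2) q(1)] by blast
    then have "nrm p = nrm q" by (auto simp: nrm_def)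
    then show ?thesis using p(4) q(4) by metis
  qed
  have edisj: "tri_edges (Tr t1) \<inter> tri_edges (Tr t2) = {}" if "t1 \<in> set S" "t2 \<in> set S" "t1 \<noteq> t2" for t1 t2
  proof (rule ccontr)
    assume "tri_edges (Tr t1) \<inter> tri_edges (Tr t2) \<noteq> {}"
    then obtain e where e1: "e \<in> tri_edges (Tr t1)" and e2: "e \<in> tri_edges (Tr t2)" by blast
    have "e \<in> dd vs ` set (te t1)" using e1 TrE[OF that(1)] by (simp only:)
    then obtain p where "p \<in> set (te t1)" "e = dd vs p" by blast
    have "e \<in> dd vs ` set (te t2)" using e2 TrE[OF that(2)] by (simp only:)
    then obtain q where "q \<in> set (te t2)" "e = dd vs q" by blast
    note \<open>p \<in> set (te t1)\<close> \<open>q \<in> set (te t2)\<close>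
    moreover have "dd vs p = dd vs q" using \<open>e = dd vs p\<close> \<open>e = dd vs q\<close> by simp
    ultimately have "p \<in> set (te t1)" "q \<in> set (te t2)" "dd vs p = dd vs q" by auto
    then have "p = q" using dd_inj that by blast
    then show False using disj[OF that] \<open>p \<in> set (te t1)\<close> \<open>q \<in> set (te t2)\<close> by auto
  qed
  have Sd: "distinct S" using distinct_concat_map_distinct[OF Sdist te_ne] .
  have injTr: "inj_on Tr (set S)"
  proof
    fix t1 t2 assume "t1 \<in> set S" "t2 \<in> set S" "Tr t1 = Tr t2"
    show "t1 = t2"
    proof (rule ccontr)
      assume "t1 \<noteq> t2"
      from edisj[OF \<open>t1 \<in> set S\<close> \<open>t2 \<in> set S\<close> this] \<open>Tr t1 = Tr t2\<close>
      have "tri_edges (Tr t1) = {}" by simp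
      moreover have "tri_edges (Tr t1) \<noteq> {}" using TrE[OF \<open>t1 \<in> set S\<close>] te_ne[of t1]
        by (cases "te t1") auto
      ultimately show False by simp
    qed
  qed
  have cardS: "card SS = length S"
    unfolding SS_def using card_image[OF injTr] distinct_card[OF Sd] by simp
  have cardX: "card XX \<le> 2 * card SS"
  proof -
    have "card XX \<le> card (dd vs ` set X)" unfolding XX_def by (rule card_mono) auto
    also have "\<dots> \<le> card (set X)" by (rule card_image_le) simp
    also have "\<dots> \<le> length X" by (rule card_length)
    finally show ?thesis using Xlen cardS by simp
  qed
  have SStri: "SS \<subseteq> triangles E"
  proof
    fix T assume "T \<in> SS"
    then obtain a b c where abc: "(a,b,c) \<in> set S" "T = {vs!a, vs!b, vs!c}" unfolding SS_def Tr_def by auto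
    have "nrm (a,b) \<in> set K" "nrm (b,c) \<in> set K" "nrm (a,c) \<in> set K" using teK[OF abc(1)] by auto
    then have "ed E vs (nrm (a,b))" "ed E vs (nrm (b,c))" "ed E vs (nrm (a,c))" using K by auto
    then have "{vs!a, vs!b} \<in> E" "{vs!b, vs!c} \<in> E" "{vs!a, vs!c} \<in> E" by (simp_all add: ed_def) (simp_all add: dd_def)
    then show "T \<in> triangles E" unfolding triangles_def abc(2) by blast
  qed
  have SSdisj: "edge_disjoint SS"
    unfolding edge_disjoint_def
  proof (intro ballI impI)
    fix T1 T2 assume "T1 \<in> SS" "T2 \<in> SS" "T1 \<noteq> T2"
    then obtain t1 t2 where "t1 \<in> set S" "t2 \<in> set S" "T1 = Tr t1" "T2 = Tr t2" unfolding SS_def by blast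
    moreover then have "t1 \<noteq> t2" using \<open>T1 \<noteq> T2\<close> by blast
    ultimately show "tri_edges T1 \<inter> tri_edges T2 = {}" using edisj by blast
  qed
  have forced: "\<forall>T\<in>SS. \<forall>e\<in>tri_edges T. e \<inter> V0' = {} \<longrightarrow> e \<in> XX"
  proof (intro ballI impI)
    fix T e assume T: "T \<in> SS" and e: "e \<in> tri_edges T" and ee: "e \<inter> V0' = {}"
    obtain t where t: "t \<in> set S" "T = Tr t" using T SS_def by auto
    then obtain p where p: "p \<in> set (te t)" "e = dd vs p" using e TrE by auto
    have "fst p \<notin> set V0" using ee p by (auto simp: V0'_def dd_def)
    moreover have "snd p \<notin> set V0" using ee p by (auto simp: V0'_def dd_def)
    ultimately have "p \<in> set X" using Sforced t p by blast
    moreover have "dd vs p \<in> E" using K teK[OF t(1) p(1)] by (auto simp: ed_def)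
    ultimately show "e \<in> XX" using p by (auto simp: XX_def)
  qed
  have core: False if w: "{w,p} \<in> E - XX" "{w,q} \<in> E - XX" "{p,q} \<in> E - XX" "w \<in> V0'" for w p q
  proof -
    obtain a where a: "a \<in> set V0" "w = vs!a" using w(4) V0'_def by auto
    have "p \<in> nbhd E w" "q \<in> nbhd E w" using w by (auto simp: nbhd_def)
    then have "p \<in> set vs" "q \<in> set vs" using cl a by auto
    then obtain b c where b: "b < n" "p = vs!b" and c: "c < n" "q = vs!c"
      using len by (auto simp: in_set_conv_nth)
    have an: "a < n" using V0n a by auto
    have "w \<noteq> p" "w \<noteq> q" "p \<noteq> q" using w edge_card2[OF sg] by auto
    then have "a \<noteq> b" "a \<noteq> c" "b \<noteq> c" using a b c by auto
    have ddE: "dd vs r \<in> E - XX" if "r \<in> set (te (a,b,c))" for r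
    proof -
      have "dd vs r \<in> dd vs ` set (te (a,b,c))" using that by auto
      then have "dd vs r \<in> {{vs!a, vs!b},{vs!b,vs!c},{vs!a,vs!c}}" by (simp only: te_dd)
      then have "dd vs r \<in> {{w,p},{p,q},{w,q}}" using a b c by simp
      then show ?thesis using w by auto
    qed
    from hit a(1) an b(1) c(1) \<open>a \<noteq> b\<close> \<open>a \<noteq> c\<close> \<open>b \<noteq> c\<close>
    have "(\<exists>r\<in>set (te (a,b,c)). r \<in> set Z) \<or> (\<exists>r\<in>set (te (a,b,c)). r \<in> set X)" by blast
    then show False
    proof
      assume "\<exists>r\<in>set (te (a,b,c)). r \<in> set Z"
      then obtain r where r: "r \<in> set (te (a,b,c))" "r \<in> set Z" by blast
      have "\<not> ed E vs r" using Z r(2) by blast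
      moreover have "dd vs r \<in> E" using ddE[OF r(1)] by blast
      ultimately show False by (simp add: ed_def)
    next
      assume "\<exists>r\<in>set (te (a,b,c)). r \<in> set X"
      then obtain r where r: "r \<in> set (te (a,b,c))" "r \<in> set X" by blast
      then have "dd vs r \<in> XX" using ddE[OF r(1)] by (auto simp: XX_def)
      then show False using ddE[OF r(1)] by auto
    qed
  qed
  have hitT: "\<forall>T\<in>triangles (E - XX). T \<inter> V0' = {}"
  proof (intro ballI)
    fix T assume "T \<in> triangles (E - XX)"
    then obtain x y z where T: "T = {x,y,z}" "{x,y} \<in> E - XX" "{y,z} \<in> E - XX" "{x,z} \<in> E - XX"
      unfolding triangles_def by blast
    show "T \<inter> V0' = {}"
    proof (rule ccontr)
      assume "T \<inter> V0' \<noteq> {}"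
      then obtain w where "w \<in> T" "w \<in> V0'" by blast
      then consider "w = x" | "w = y" | "w = z" using T by auto
      then show False
      proof cases
        case 1 then show False using core[of w y z] T \<open>w \<in> V0'\<close> by auto
      next
        case 2 then show False using core[of w x z] T \<open>w \<in> V0'\<close> by (auto simp: insert_commute)
      next
        case 3 then show False using core[of w x y] T \<open>w \<in> V0'\<close> by (auto simp: insert_commute)
      qed
    qed
  qed
  have "V0' \<noteq> {}" using V0ne by (simp add: V0'_def)
  moreover have "V0' \<subseteq> V" using V0n len sub by (auto simp: V0'_def)
  moreover have "XX \<subseteq> E" by (auto simp: XX_def)
  ultimately show ?thesis unfolding reducible_def V0'_def[symmetric]
    using SStri SSdisj cardX hitT forced by blast
qed

lemma tree_sound:
  fixes vs :: "'a list"
  assumes sg: "simple_graph V E" and dist: "distinct vs" and sub: "set vs \<subseteq> V"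
    and len: "length vs = n"
    and cl: "\<forall>a\<in>set V0. nbhd E (vs!a) \<subseteq> set vs"
    and CLf: "\<forall>c\<in>set CL. \<exists>p\<in>set c. ed E vs p"
  shows "\<forall>p\<in>set K. ed E vs p \<Longrightarrow> \<forall>p\<in>set Z. \<not> ed E vs p \<Longrightarrow> check_tree n V0 CL K Z t
     \<Longrightarrow> reducible V E ((!) vs ` set V0)"
proof (induction t arbitrary: K Z)
  case (Leaf S X)
  then show ?case using leaf_sound[OF sg dist sub len cl] by simp
next
  case (Contra i)
  then have "i < length CL" "\<forall>p\<in>set (CL!i). p \<in> set Z" by (auto simp: list_all_iff)
  moreover from CLf \<open>i < length CL\<close> obtain p where "p \<in> set (CL!i)" "ed E vs p" by (meson nth_mem)
  ultimately show ?case using Contra.prems(2) by auto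
next
  case (Split p t1 t2)
  show ?case
  proof (cases "ed E vs p")
    case True then show ?thesis using Split.IH(1)[of "p#K" Z] Split.prems by simp
  next
    case False then show ?thesis using Split.IH(2)[of K "p#Z"] Split.prems by simp
  qed
qed

lemma ed_nrm[simp]: "ed E vs (nrm p) = ed E vs p"
  by (simp add: ed_def)

lemma sg_edge_sub: "simple_graph V E \<Longrightarrow> {x,y} \<in> E \<Longrightarrow> x \<in> V \<and> y \<in> V"
  by (auto simp: simple_graph_def)

lemma nbhd_sub: "simple_graph V E \<Longrightarrow> nbhd E w \<subseteq> V"
  by (auto simp: nbhd_def simple_graph_def)

lemma nbhd_fin: "simple_graph V E \<Longrightarrow> finite (nbhd E w)"
  using nbhd_sub by (metis finite_subset simple_graph_def)

lemma nbhd_self: "simple_graph V E \<Longrightarrow> w \<notin> nbhd E w"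
  by (auto simp: nbhd_def simple_graph_def)

lemma idx_tail: "i \<ge> 1 \<Longrightarrow> i < length (w # ws) \<Longrightarrow> (w # ws) ! i \<in> set ws"
  by (cases i) auto

lemma idx_tail2: "y \<in> set ws \<Longrightarrow> \<exists>j. 1 \<le> j \<and> j < length (w # ws) \<and> (w # ws) ! j = y"
proof -
  assume "y \<in> set ws"
  then obtain k where "k < length ws" "ws ! k = y" by (auto simp: in_set_conv_nth)
  then show ?thesis by (intro exI[of _ "Suc k"]) auto
qed

lemma U_case:
  fixes w :: 'a
  assumes sg: "simple_graph V E" and wV: "w \<in> V"
    and k: "card (nbhd E w) = 5 \<or> card (nbhd E w) = 6"
    and md: "\<forall>x\<in>nbhd E w. \<exists>y\<in>nbhd E w. {x,y} \<in> E"
    and abc: "a \<in> nbhd E w" "b \<in> nbhd E w" "c \<in> nbhd E w" "a \<noteq> b" "a \<noteq> c" "b \<noteq> c"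
    and nab: "{a,b} \<notin> E" and nac: "{a,c} \<notin> E"
  shows "reducible V E {w}"
proof -
  define N where "N = nbhd E w"
  have finN: "finite N" using nbhd_fin[OF sg] N_def by simp
  obtain rs where rs: "set rs = N - {a,b,c}" "distinct rs"
    using finite_distinct_list[of "N - {a,b,c}"] finN by auto
  define ws where "ws = a # b # c # rs"
  define vs where "vs = w # ws"
  have setws: "set ws = N" using rs abc N_def by (auto simp: ws_def)
  have dws: "distinct ws" using rs abc by (auto simp: ws_def)
  have wN: "w \<notin> N" using nbhd_self[OF sg] N_def by simp
  have dist: "distinct vs" using dws setws wN by (simp add: vs_def)
  have sub: "set vs \<subseteq> V" using setws wV nbhd_sub[OF sg] N_def by (auto simp: vs_def)
  have lenws: "length ws = card N" using distinct_card[OF dws] setws by simp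
  define n where "n = length vs"
  have n: "n = card N + 1" using lenws by (simp add: n_def vs_def)
  have cl: "\<forall>a\<in>set [0]. nbhd E (vs!a) \<subseteq> set vs" using setws N_def by (auto simp: vs_def)
  have tailN: "vs ! i \<in> N" if "1 \<le> i" "i < n" for i
    using idx_tail[of i w ws] that setws by (simp add: vs_def n_def)
  have K0: "\<forall>p\<in>set (U_K0 n). ed E vs p"
  proof
    fix p assume "p \<in> set (U_K0 n)"
    then obtain i where i: "p = (0,i)" "1 \<le> i" "i < n" by (auto simp: U_K0_def)
    then have "vs ! i \<in> N" using tailN by simp
    then show "ed E vs p" using i N_def by (simp add: ed_def dd_def nbhd_def vs_def)
  qed
  have Z0: "\<forall>p\<in>set U_Z0. \<not> ed E vs p"
    using nab nac by (simp add: U_Z0_def ed_def dd_def vs_def ws_def)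
  have CLf: "\<forall>cl\<in>set (U_CL n). \<exists>p\<in>set cl. ed E vs p"
  proof
    fix cl assume "cl \<in> set (U_CL n)"
    then obtain i where i: "1 \<le> i" "i < n" "cl = map (\<lambda>j. nrm (i,j)) (filter (\<lambda>j. j \<noteq> i) [1..<n])"
      by (auto simp: U_CL_def)
    have "vs ! i \<in> N" using tailN i by simp
    then obtain y where y: "y \<in> N" "{vs ! i, y} \<in> E" using md N_def by blast
    then obtain j where j: "1 \<le> j" "j < n" "vs ! j = y"
      using idx_tail2[of y ws w] setws by (auto simp: vs_def n_def)
    have "j \<noteq> i" using y j edge_card2[OF sg] by auto
    then have "nrm (i,j) \<in> set cl" using i j by auto
    moreover have "ed E vs (i,j)" using y j by (simp add: ed_def dd_def)
    then have "ed E vs (nrm (i,j))" by simp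
    ultimately show "\<exists>p\<in>set cl. ed E vs p" by blast
  qed
  have img: "(!) vs ` set [0] = {w}" by (simp add: vs_def)
  from k have "n = 6 \<or> n = 7" using n N_def by auto
  then show ?thesis
  proof
    assume n6: "n = 6"
    show ?thesis using tree_sound[OF sg dist sub n_def[symmetric] cl CLf K0 Z0] chk_U5 img n6 by simp
  next
    assume n7: "n = 7"
    show ?thesis using tree_sound[OF sg dist sub n_def[symmetric] cl CLf K0 Z0] chk_U6 img n7 by simp
  qed
qed


lemma nthD:
  assumes vs: "vs = u # v # Il @ Al @ Bl"
  shows "i \<in> set (D_I (length Il)) \<Longrightarrow> vs ! i \<in> set Il"
    and "i \<in> set (D_A (length Il) (length Al)) \<Longrightarrow> vs ! i \<in> set Al"
    and "i \<in> set (D_B (length Il) (length Al) (length Bl)) \<Longrightarrow> vs ! i \<in> set Bl"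
proof -
  assume "i \<in> set (D_I (length Il))"
  then have "2 \<le> i" "i < 2 + length Il" by (auto simp: D_I_def)
  then have "\<exists>k. i = Suc (Suc k) \<and> k < length Il" by (intro exI[of _ "i - 2"]) linarith
  then obtain k where k: "i = Suc (Suc k)" "k < length Il" by blast
  then show "vs ! i \<in> set Il" using k by (simp add: vs nth_append)
next
  assume "i \<in> set (D_A (length Il) (length Al))"
  then have "2 + length Il \<le> i" "i < 2 + length Il + length Al" by (auto simp: D_A_def)
  then have "\<exists>k. i = Suc (Suc (length Il + k)) \<and> k < length Al" by (intro exI[of _ "i - 2 - length Il"]) linarith
  then obtain k where k: "i = Suc (Suc (length Il + k))" "k < length Al" by blast
  then show "vs ! i \<in> set Al" using k by (simp add: vs nth_append)
next
  assume "i \<in> set (D_B (length Il) (length Al) (length Bl))"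
  then have "2 + length Il + length Al \<le> i" "i < 2 + length Il + length Al + length Bl" by (auto simp: D_B_def)
  then have "\<exists>k. i = Suc (Suc (length Il + length Al + k)) \<and> k < length Bl" by (intro exI[of _ "i - 2 - length Il - length Al"]) linarith
  then obtain k where k: "i = Suc (Suc (length Il + length Al + k))" "k < length Bl" by blast
  then show "vs ! i \<in> set Bl" using k by (simp add: vs nth_append)
qed

lemma D_len:
  shows "i \<in> set (D_I nI) \<Longrightarrow> i < 2 + nI + nA + nB"
    and "i \<in> set (D_A nI nA) \<Longrightarrow> i < 2 + nI + nA + nB"
    and "i \<in> set (D_B nI nA nB) \<Longrightarrow> i < 2 + nI + nA + nB"
  by (auto simp: D_I_def D_A_def D_B_def)

lemma dcl_ok:
  assumes W: "\<forall>x\<in>set W. x < length vs \<and> vs ! x \<in> N" and dist: "distinct vs"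
    and dn: "\<forall>x\<in>N. \<forall>y\<in>N. \<forall>z\<in>N. x \<noteq> y \<longrightarrow> x \<noteq> z \<longrightarrow> y \<noteq> z \<longrightarrow> {x,y} \<in> E \<or> {x,z} \<in> E"
  shows "\<forall>cl\<in>set (dcl W). \<exists>p\<in>set cl. ed E vs p"
proof
  fix cl assume "cl \<in> set (dcl W)"
  then obtain x y z where xyz: "x \<in> set W" "y \<in> set W" "z \<in> set W" "y \<noteq> x" "z \<noteq> x" "z \<noteq> y"
    "cl = [nrm (x,y), nrm (x,z)]" by (auto simp: dcl_def)
  have lt: "x < length vs" "y < length vs" "z < length vs" using W xyz by auto
  have "vs ! x \<noteq> vs ! y" "vs ! x \<noteq> vs ! z" "vs ! y \<noteq> vs ! z"
    using xyz lt dist by (auto simp: nth_eq_iff_index_eq)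
  then have "{vs!x, vs!y} \<in> E \<or> {vs!x, vs!z} \<in> E" using dn W xyz by blast
  then have "ed E vs (x,y) \<or> ed E vs (x,z)" by (simp add: ed_def dd_def)
  then show "\<exists>p\<in>set cl. ed E vs p" using xyz(7) by auto
qed

lemma D_case:
  fixes u v :: 'a
  assumes sg: "simple_graph V E" and uv: "{u,v} \<in> E"
    and ku: "card (nbhd E u) = 5 \<or> card (nbhd E u) = 6"
    and kv: "card (nbhd E v) = 5 \<or> card (nbhd E v) = 6"
    and du: "\<forall>x\<in>nbhd E u. \<forall>y\<in>nbhd E u. \<forall>z\<in>nbhd E u. x \<noteq> y \<longrightarrow> x \<noteq> z \<longrightarrow> y \<noteq> z \<longrightarrow> {x,y} \<in> E \<or> {x,z} \<in> E"
    and dv: "\<forall>x\<in>nbhd E v. \<forall>y\<in>nbhd E v. \<forall>z\<in>nbhd E v. x \<noteq> y \<longrightarrow> x \<noteq> z \<longrightarrow> y \<noteq> z \<longrightarrow> {x,y} \<in> E \<or> {x,z} \<in> E"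
  shows "reducible V E {u,v}"
proof -
  define Nu where "Nu = nbhd E u"
  define Nv where "Nv = nbhd E v"
  have uV: "u \<in> V" and vV: "v \<in> V" using sg_edge_sub[OF sg uv] by auto
  have uv_ne: "u \<noteq> v" using edge_card2[OF sg uv] .
  have vNu: "v \<in> Nu" using uv by (simp add: Nu_def nbhd_def)
  have uNv: "u \<in> Nv" using uv by (simp add: Nv_def nbhd_def insert_commute)
  have uNu: "u \<notin> Nu" and vNv: "v \<notin> Nv" using nbhd_self[OF sg] Nu_def Nv_def by auto
  have finu: "finite Nu" and finv: "finite Nv" using nbhd_fin[OF sg] Nu_def Nv_def by auto
  define A where "A = Nu - {v}"
  define B where "B = Nv - {u}"
  define I where "I = A \<inter> B"
  define A' where "A' = A - B"
  define B' where "B' = B - A"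
  have NuE: "x \<in> Nu \<longleftrightarrow> {u,x} \<in> E" for x by (simp add: Nu_def nbhd_def)
  have NvE: "x \<in> Nv \<longleftrightarrow> {v,x} \<in> E" for x by (simp add: Nv_def nbhd_def)
  have A'nv: "{v,x} \<notin> E" if "x \<in> A'" for x
  proof
    assume "{v,x} \<in> E"
    then have "x \<in> Nv" using NvE by blast
    moreover have "x \<in> Nu" "x \<notin> B" using that by (auto simp: A'_def A_def)
    ultimately show False using uNu by (auto simp: B_def)
  qed
  have B'nu: "{u,x} \<notin> E" if "x \<in> B'" for x
  proof
    assume "{u,x} \<in> E"
    then have "x \<in> Nu" using NuE by blast
    moreover have "x \<in> Nv" "x \<notin> A" using that by (auto simp: B'_def B_def)
    ultimately show False using vNv by (auto simp: A_def)
  qed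
  have cA': "card A' \<le> 1"
  proof -
    have fin: "finite A'" using finu by (auto simp: A'_def A_def)
    have "\<forall>x\<in>A'. \<forall>y\<in>A'. x = y"
    proof (intro ballI, rule ccontr)
      fix x y assume x: "x \<in> A'" and y: "y \<in> A'" and xy: "x \<noteq> y"
      have "x \<in> Nu" "y \<in> Nu" "x \<noteq> v" "y \<noteq> v" using x y by (auto simp: A'_def A_def)
      then have m: "v \<in> nbhd E u" "x \<in> nbhd E u" "y \<in> nbhd E u" using vNu Nu_def by auto
      have "v \<noteq> x" "v \<noteq> y" using \<open>x \<noteq> v\<close> \<open>y \<noteq> v\<close> by auto
      then have "{v,x} \<in> E \<or> {v,y} \<in> E" using du m xy by blast
      then show False using A'nv x y by auto
    qed
    then show ?thesis using card_le_Suc0_iff_eq[OF fin] by simp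
  qed
  have cB': "card B' \<le> 1"
  proof -
    have fin: "finite B'" using finv by (auto simp: B'_def B_def)
    have "\<forall>x\<in>B'. \<forall>y\<in>B'. x = y"
    proof (intro ballI, rule ccontr)
      fix x y assume x: "x \<in> B'" and y: "y \<in> B'" and xy: "x \<noteq> y"
      have "x \<in> Nv" "y \<in> Nv" "x \<noteq> u" "y \<noteq> u" using x y by (auto simp: B'_def B_def)
      then have m: "u \<in> nbhd E v" "x \<in> nbhd E v" "y \<in> nbhd E v" using uNv Nv_def by auto
      have "u \<noteq> x" "u \<noteq> y" using \<open>x \<noteq> u\<close> \<open>y \<noteq> u\<close> by auto
      then have "{u,x} \<in> E \<or> {u,y} \<in> E" using dv m xy by blast
      then show False using B'nu x y by auto
    qed
    then show ?thesis using card_le_Suc0_iff_eq[OF fin] by simp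
  qed
  have finI: "finite I" and finA': "finite A'" and finB': "finite B'"
    using finu finv by (auto simp: I_def A'_def B'_def A_def B_def)
  obtain Il where Il: "set Il = I" "distinct Il" using finite_distinct_list[OF finI] by blast
  obtain Al where Al: "set Al = A'" "distinct Al" using finite_distinct_list[OF finA'] by blast
  obtain Bl where Bl: "set Bl = B'" "distinct Bl" using finite_distinct_list[OF finB'] by blast
  define vs where "vs = u # v # Il @ Al @ Bl"
  define nI where "nI = length Il"
  define nA where "nA = length Al"
  define nB where "nB = length Bl"
  have cI: "card I = nI" using distinct_card[OF Il(2)] Il(1) nI_def by simp
  have cA: "card A' = nA" using distinct_card[OF Al(2)] Al(1) nA_def by simp
  have cB: "card B' = nB" using distinct_card[OF Bl(2)] Bl(1) nB_def by simp
  have cardA: "card A = nI + nA"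
  proof -
    have "A = I \<union> A'" "I \<inter> A' = {}" by (auto simp: I_def A'_def)
    then have "card A = card I + card A'" using finI finA' by (simp add: card_Un_disjoint)
    then show ?thesis using cI cA by simp
  qed
  have cardB: "card B = nI + nB"
  proof -
    have "B = I \<union> B'" "I \<inter> B' = {}" by (auto simp: I_def B'_def)
    then have "card B = card I + card B'" using finI finB' by (simp add: card_Un_disjoint)
    then show ?thesis using cI cB by simp
  qed
  have cardA2: "card Nu = card A + 1"
  proof -
    have "card A = card Nu - 1" using vNu finu by (simp add: A_def card_Diff_singleton)
    moreover have "card Nu > 0" using vNu finu card_gt_0_iff by blast
    ultimately show ?thesis by linarith
  qed
  have cardB2: "card Nv = card B + 1"
  proof -
    have "card B = card Nv - 1" using uNv finv by (simp add: B_def card_Diff_singleton)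
    moreover have "card Nv > 0" using uNv finv card_gt_0_iff by blast
    ultimately show ?thesis by linarith
  qed
  have IA: "I \<subseteq> A" "A' \<subseteq> A" "I \<subseteq> B" "B' \<subseteq> B" by (auto simp: I_def A'_def B'_def)
  have uA: "u \<notin> A" "u \<notin> B" "v \<notin> A" "v \<notin> B" using uNu vNv by (auto simp: A_def B_def)
  have disj3: "I \<inter> A' = {}" "I \<inter> B' = {}" "A' \<inter> B' = {}" by (auto simp: I_def A'_def B'_def)
  have "u \<notin> I" "u \<notin> A'" "u \<notin> B'" "v \<notin> I" "v \<notin> A'" "v \<notin> B'" using IA uA by blast+
  then have dist: "distinct vs" using Il Al Bl uv_ne disj3
    by (simp add: vs_def distinct_append disjoint_iff)
  have AV: "A \<subseteq> V" "B \<subseteq> V" using nbhd_sub[OF sg] Nu_def Nv_def by (auto simp: A_def B_def)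
  have sub: "set vs \<subseteq> V" using Il Al Bl uV vV IA AV by (auto simp: vs_def)
  define n where "n = length vs"
  have n: "n = 2 + nI + nA + nB" by (simp add: n_def vs_def nI_def nA_def nB_def)
  have cl: "\<forall>a\<in>set [0,1]. nbhd E (vs!a) \<subseteq> set vs"
    using Il Al Bl by (auto simp: vs_def Nu_def[symmetric] Nv_def[symmetric] I_def A'_def B'_def A_def B_def)
  note nd = nthD[OF vs_def, folded nI_def nA_def nB_def]
  have iI: "vs ! i \<in> I" if "i \<in> set (D_I nI)" for i using nd(1)[OF that] Il by simp
  have iA: "vs ! i \<in> A'" if "i \<in> set (D_A nI nA)" for i using nd(2)[OF that] Al by simp
  have iB: "vs ! i \<in> B'" if "i \<in> set (D_B nI nA nB)" for i using nd(3)[OF that] Bl by simp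
  have K0: "\<forall>p\<in>set (D_K0 nI nA nB). ed E vs p"
  proof
    fix p assume "p \<in> set (D_K0 nI nA nB)"
    then consider "p = (0,1)" | i where "p = (0,i)" "i \<in> set (D_I nI) \<or> i \<in> set (D_A nI nA)"
      | i where "p = (1,i)" "i \<in> set (D_I nI) \<or> i \<in> set (D_B nI nA nB)"
      by (auto simp: D_K0_def)
    then show "ed E vs p"
    proof cases
      case 1 then show ?thesis using uv by (simp add: ed_def dd_def vs_def)
    next
      case (2 i)
      then have "vs ! i \<in> Nu" using iI iA by (auto simp: I_def A'_def A_def)
      then show ?thesis using 2 by (simp add: ed_def dd_def vs_def NuE)
    next
      case (3 i)
      then have "vs ! i \<in> Nv" using iI iB by (auto simp: I_def B'_def B_def)
      then show ?thesis using 3 by (simp add: ed_def dd_def vs_def NvE)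
    qed
  qed
  have Z0: "\<forall>p\<in>set (D_Z0 nI nA nB). \<not> ed E vs p"
  proof
    fix p assume "p \<in> set (D_Z0 nI nA nB)"
    then consider i where "p = (0,i)" "i \<in> set (D_B nI nA nB)"
      | i where "p = (1,i)" "i \<in> set (D_A nI nA)"
      by (auto simp: D_Z0_def)
    then show "\<not> ed E vs p"
    proof cases
      case (1 i) then show ?thesis using B'nu[OF iB[OF 1(2)]] by (simp add: ed_def dd_def vs_def)
    next
      case (2 i) then show ?thesis using A'nv[OF iA[OF 2(2)]] by (simp add: ed_def dd_def vs_def)
    qed
  qed
  have W1: "\<forall>x\<in>set (1 # D_I nI @ D_A nI nA). x < length vs \<and> vs ! x \<in> Nu"
    using iI iA vNu D_len[of _ nI nA nB] n n_def by (auto simp: I_def A'_def A_def vs_def)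
  have W2: "\<forall>x\<in>set (0 # D_I nI @ D_B nI nA nB). x < length vs \<and> vs ! x \<in> Nv"
    using iI iB uNv D_len[of _ nI nA nB] n n_def by (auto simp: I_def B'_def B_def vs_def)
  have CLf: "\<forall>cl\<in>set (D_CL nI nA nB). \<exists>p\<in>set cl. ed E vs p"
    using dcl_ok[OF W1 dist du[folded Nu_def]] dcl_ok[OF W2 dist dv[folded Nv_def]]
    by (auto simp: D_CL_def)
  have img: "(!) vs ` set [0,1] = {u,v}" by (simp add: vs_def)
  note TS = tree_sound[OF sg dist sub n_def[symmetric] cl CLf K0 Z0]
  have hA: "nI + nA = 4 \<or> nI + nA = 5" using ku cardA cardA2 Nu_def by auto
  have hB: "nI + nB = 4 \<or> nI + nB = 5" using kv cardB cardB2 Nv_def by auto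
  have "nA \<le> 1" "nB \<le> 1" using cA' cB' cA cB by auto
  then have six: "(nI = 5 \<and> nA = 0 \<and> nB = 0) \<or> (nI = 4 \<and> nA = 0 \<and> nB = 0) \<or> (nI = 4 \<and> nA = 1 \<and> nB = 0)
    \<or> (nI = 4 \<and> nA = 0 \<and> nB = 1) \<or> (nI = 4 \<and> nA = 1 \<and> nB = 1) \<or> (nI = 3 \<and> nA = 1 \<and> nB = 1)"
  proof -
    have "nA = 0 \<or> nA = 1" "nB = 0 \<or> nB = 1" using \<open>nA \<le> 1\<close> \<open>nB \<le> 1\<close> by auto
    then show ?thesis using hA hB by (elim disjE) simp_all
  qed
  have fin: "check_tree n [0,1] (D_CL nI nA nB) (D_K0 nI nA nB) (D_Z0 nI nA nB) t \<Longrightarrow> ?thesis" for t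
    using TS img by simp
  from six show ?thesis
  proof (elim disjE conjE)
    assume "nI = 5" "nA = 0" "nB = 0"
    then show ?thesis using fin[of tree_D500] chk_D500 n by simp
  next
    assume "nI = 4" "nA = 0" "nB = 0"
    then show ?thesis using fin[of tree_D400] chk_D400 n by simp
  next
    assume "nI = 4" "nA = 1" "nB = 0"
    then show ?thesis using fin[of tree_D410] chk_D410 n by simp
  next
    assume "nI = 4" "nA = 0" "nB = 1"
    then show ?thesis using fin[of tree_D401] chk_D401 n by simp
  next
    assume "nI = 4" "nA = 1" "nB = 1"
    then show ?thesis using fin[of tree_D411] chk_D411 n by simp
  next
    assume "nI = 3" "nA = 1" "nB = 1"
    then show ?thesis using fin[of tree_D311] chk_D311 n by simp
  qed
qed

lemma robust_md:
  assumes rb: "robust V E" and wV: "w \<in> V" and x: "x \<in> nbhd E w"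
  shows "\<exists>y\<in>nbhd E w. {x,y} \<in> E"
proof -
  define N where "N = nbhd E w"
  define C where "C = component_in E N x"
  have c5: "card C \<ge> 5" using rb wV x by (auto simp: robust_def C_def N_def)
  have "\<not> C \<subseteq> {x}"
  proof
    assume "C \<subseteq> {x}"
    then have "card C \<le> card {x}" by (intro card_mono) auto
    then show False using c5 by simp
  qed
  then obtain y where y: "y \<in> C" "y \<noteq> x" by blast
  then have "(adj_in E N)\<^sup>*\<^sup>* x y" by (simp add: C_def component_in_def)
  then show ?thesis
  proof (cases rule: converse_rtranclpE)
    case base then show ?thesis using y by simp
  next
    case (step z)
    then show ?thesis by (auto simp: adj_in_def N_def)
  qed
qed

lemma robust_card:
  assumes sg: "simple_graph V E" and rb: "robust V E" and wV: "w \<in> V" and x: "x \<in> nbhd E w"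
  shows "card (nbhd E w) \<ge> 5"
proof -
  have "card (component_in E (nbhd E w) x) \<ge> 5" using rb wV x by (auto simp: robust_def)
  moreover have "card (component_in E (nbhd E w) x) \<le> card (nbhd E w)"
    by (rule card_mono[OF nbhd_fin[OF sg]]) (auto simp: component_in_def)
  ultimately show ?thesis by simp
qed

theorem proposition5p2:
  fixes V :: "'a set" and E :: "'a set set" and u v :: 'a
  assumes "simple_graph V E"
    and "robust V E"
    and "{u, v} \<in> E"
    and "degree E u \<le> 6" and "degree E v \<le> 6"
  shows "reducible V E {u} \<or> reducible V E {v} \<or> reducible V E {u, v}"
proof -
  note sg = assms(1) and rb = assms(2) and uv = assms(3)
  have uV: "u \<in> V" and vV: "v \<in> V" using sg_edge_sub[OF sg uv] by auto
  have vNu: "v \<in> nbhd E u" using uv by (simp add: nbhd_def)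
  have uNv: "u \<in> nbhd E v" using uv by (simp add: nbhd_def insert_commute)
  have ku: "card (nbhd E u) = 5 \<or> card (nbhd E u) = 6"
    using robust_card[OF sg rb uV vNu] assms(4) by (auto simp: degree_def)
  have kv: "card (nbhd E v) = 5 \<or> card (nbhd E v) = 6"
    using robust_card[OF sg rb vV uNv] assms(5) by (auto simp: degree_def)
  have mdu: "\<forall>x\<in>nbhd E u. \<exists>y\<in>nbhd E u. {x,y} \<in> E" using robust_md[OF rb uV] by blast
  have mdv: "\<forall>x\<in>nbhd E v. \<exists>y\<in>nbhd E v. {x,y} \<in> E" using robust_md[OF rb vV] by blast
  show ?thesis
  proof (cases "\<exists>a\<in>nbhd E u. \<exists>b\<in>nbhd E u. \<exists>c\<in>nbhd E u. a \<noteq> b \<and> a \<noteq> c \<and> b \<noteq> c \<and> {a,b} \<notin> E \<and> {a,c} \<notin> E")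
    case True
    then obtain a b c where abc: "a \<in> nbhd E u" "b \<in> nbhd E u" "c \<in> nbhd E u" "a \<noteq> b" "a \<noteq> c" "b \<noteq> c"
      "{a,b} \<notin> E" "{a,c} \<notin> E" by blast
    show ?thesis using U_case[OF sg uV ku mdu abc] by simp
  next
    case nu: False
    show ?thesis
    proof (cases "\<exists>a\<in>nbhd E v. \<exists>b\<in>nbhd E v. \<exists>c\<in>nbhd E v. a \<noteq> b \<and> a \<noteq> c \<and> b \<noteq> c \<and> {a,b} \<notin> E \<and> {a,c} \<notin> E")
      case True
      then obtain a b c where abc: "a \<in> nbhd E v" "b \<in> nbhd E v" "c \<in> nbhd E v" "a \<noteq> b" "a \<noteq> c" "b \<noteq> c"
        "{a,b} \<notin> E" "{a,c} \<notin> E" by blast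
      show ?thesis using U_case[OF sg vV kv mdv abc] by simp
    next
      case nv: False
      have du: "\<forall>x\<in>nbhd E u. \<forall>y\<in>nbhd E u. \<forall>z\<in>nbhd E u. x \<noteq> y \<longrightarrow> x \<noteq> z \<longrightarrow> y \<noteq> z \<longrightarrow> {x,y} \<in> E \<or> {x,z} \<in> E"
        using nu by blast
      have dv: "\<forall>x\<in>nbhd E v. \<forall>y\<in>nbhd E v. \<forall>z\<in>nbhd E v. x \<noteq> y \<longrightarrow> x \<noteq> z \<longrightarrow> y \<noteq> z \<longrightarrow> {x,y} \<in> E \<or> {x,z} \<in> E"
        using nv by blast
      show ?thesis using D_case[OF sg uv ku kv du dv] by simp
    qed
  qed
qed

end
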